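(* Let $\lambda\ge\lambda_0$ be such that every state of $\mathcal{E}^o\cup\mathcal{E}^a$ is transient for $\{\varphi^\lambda_t\}_{t\ge0}$, and let $f_\lambda(x)=\big(\bm{\alpha}(\lambda I-T)^{-1}\bm{s}\big)^{-1}\bm{\alpha}e^{(T-\lambda I)x}\bm{s}$, $x\ge0$, be the exponentially tilted density. Suppose $\varphi^\lambda_0$ has initial distribution $(\widehat{\bm{\alpha}}^+,\widehat{\bm{\alpha}}^-)$, i.e. $\mathbb{P}(\varphi^\lambda_0=i^o)=\widehat{\alpha}^+_i$ and $\mathbb{P}(\varphi^\lambda_0=i^a)=\widehat{\alpha}^-_i$. Then the signed measure $B\mapsto \mathbb{E}[\mathbb{1}\{\tau\in B\}\beta(\varphi^\lambda_\tau)]$ on Borel sets $B\subseteq[0,\infty)$ is absolutely continuous and, for all $x\ge0$, $$f_\lambda(x)=\frac{w^++w^-}{\bm{\alpha}(\lambda I-T)^{-1}\bm{s}}\cdot\frac{\mathbb{E}[\mathbb{1}\{\tau\in \mathrm{d}x\}\beta(\varphi^\lambda_\tau)]}{\mathrm{d}x}=\frac{w^++w^-}{\bm{\alpha}(\lambda I-T)^{-1}\bm{s}}\,(\widehat{\bm{\alpha}}^+,\widehat{\bm{\alpha}}^-)\exp\!\left(\begin{bmatrix}T^+-\lambda I & T^-\\ T^- & T^+-\lambda I\end{bmatrix}x\right)\begin{bmatrix}\bm{s}\\-\bm{s}\end{bmatrix},$$ where the middle expression denotes the Lebesgue density of that signed measure at $x$.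
   Context: Let $p\ge1$, $\bm{\alpha}=(\alpha_1,\dots,\alpha_p)$ a real row vector, $T=(t_{ij})$ a real $p\times p$ matrix and $\bm{s}=(s_1,\dots,s_p)^\intercal$ a real column vector such that $f(x)=\bm{\alpha}e^{Tx}\bm{s}$, $x\ge0$, is a probability density on $(0,\infty)$ (a matrix-exponential distribution) and the eigenvalue of $T$ with largest real part is real and strictly negative. Then for $\lambda\ge0$, $\bm{\alpha}(\lambda I-T)^{-1}\bm{s}=\int_0^\infty e^{-\lambda r}f(r)\,\mathrm{d}r>0$. Define $p\times p$ matrices $T^+=(t^+_{ij})$, $T^-=(t^-_{ij})$ by $t^+_{ij}=\max\{0,t_{ij}\}$, $t^-_{ij}=\max\{0,-t_{ij}\}$ for $i\neq j$, and $t^+_{ii}=t_{ii}$, $t^-_{ii}=0$ (so $T=T^+-T^-$). Define column vectors $\bm{s}^\pm$ by $s^\pm_i=\max\{0,\pm s_i\}$. Let $\lambda_0=\min\{r\ge0:\ t_{ii}+\sum_{j\neq i}|t_{ij}|+|s_i|\le r\text{ for all }i\}$. Let $w^\pm=\sum_{i=1}^p\max\{0,\pm\alpha_i\}$, let $\alpha^\pm_i=\max\{0,\pm\alpha_i\}/w^\pm$ if $w^\pm>0$ and $\alpha^\pm_i=0$ if $w^\pm=0$, $\bm{\alpha}^\pm=(\alpha^\pm_1,\dots,\alpha^\pm_p)$ (so $\bm{\alpha}=w^+\bm{\alpha}^+-w^-\bm{\alpha}^-$), and $\widehat{\bm{\alpha}}^\pm=\frac{w^\pm}{w^++w^-}\bm{\alpha}^\pm$.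 For $\lambda\ge\lambda_0$, let $\{\varphi^\lambda_t\}_{t\ge0}$ be a continuous-time Markov jump process on $\mathcal{E}=\mathcal{E}^o\cup\mathcal{E}^a\cup\{\Delta^o\}\cup\{\Delta^a\}$, $\mathcal{E}^o=\{1^o,\dots,p^o\}$, $\mathcal{E}^a=\{1^a,\dots,p^a\}$, with subintensity matrix (states ordered $\mathcal{E}^o,\mathcal{E}^a,\Delta^o,\Delta^a$) $$G=\begin{bmatrix}T^+-\lambda I & T^- & \bm{s}^+ & \bm{s}^-\\ T^- & T^+-\lambda I & \bm{s}^- & \bm{s}^+\\ \bm{0}&\bm{0}&0&0\\ \bm{0}&\bm{0}&0&0\end{bmatrix}.$$ Thus $\Delta^o,\Delta^a$ are absorbing, and from a state in $\mathcal{E}^o\cup\mathcal{E}^a$ the process is killed at rate equal to minus the corresponding row sum of $G$, being sent to a cemetery state $\dagger$. Let $\tau=\inf\{x\ge0:\varphi^\lambda_x\notin\mathcal{E}^o\cup\mathcal{E}^a\}$, and $\beta(\Delta^o)=1$, $\beta(\Delta^a)=-1$, $\beta(\dagger)=0$. *)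

theory Defs
  imports "HOL-Probability.Probability"
begin

text \<open>A p x p matrix is a function nat => nat => real, only entries with indices < p
  matter; vectors are functions nat => real.\<close>

type_synonym rmat = "nat \<Rightarrow> nat \<Rightarrow> real"

definition mid :: rmat where "mid = (\<lambda>i j. if i = j then 1 else 0)"

definition mmul :: "nat \<Rightarrow> rmat \<Rightarrow> rmat \<Rightarrow> rmat" where
  "mmul n A B = (\<lambda>i j. \<Sum>k<n. A i k * B k j)"

definition mscale :: "real \<Rightarrow> rmat \<Rightarrow> rmat" where
  "mscale c A = (\<lambda>i j. c * A i j)"

fun mpow :: "nat \<Rightarrow> rmat \<Rightarrow> nat \<Rightarrow> rmat" where
  "mpow n A 0 = mid"
| "mpow n A (Suc k) = mmul n (mpow n A k) A"

definition mexp :: "nat \<Rightarrow> rmat \<Rightarrow> rmat" where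
  "mexp n A = (\<lambda>i j. \<Sum>k. mpow n A k i j / fact k)"

text \<open>Inverse of an n x n matrix (meaningful when it is invertible).\<close>
definition minv :: "nat \<Rightarrow> rmat \<Rightarrow> rmat" where
  "minv n A = (SOME B. \<forall>i<n. \<forall>j<n. mmul n A B i j = mid i j \<and> mmul n B A i j = mid i j)"

definition cdet :: "nat \<Rightarrow> (nat \<Rightarrow> nat \<Rightarrow> complex) \<Rightarrow> complex" where
  "cdet n A = (\<Sum>\<pi> | \<pi> permutes {..<n}. of_int (sign \<pi>) * (\<Prod>i<n. A i (\<pi> i)))"

definition is_eigenvalue :: "nat \<Rightarrow> rmat \<Rightarrow> complex \<Rightarrow> bool" where
  "is_eigenvalue n T z \<longleftrightarrow>
     cdet n (\<lambda>i j. (if i = j then z else 0) - complex_of_real (T i j)) = 0"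

definition bilin :: "nat \<Rightarrow> (nat \<Rightarrow> real) \<Rightarrow> rmat \<Rightarrow> (nat \<Rightarrow> real) \<Rightarrow> real" where
  "bilin n a A v = (\<Sum>i<n. \<Sum>j<n. a i * A i j * v j)"

definition ME_density :: "nat \<Rightarrow> (nat \<Rightarrow> real) \<Rightarrow> rmat \<Rightarrow> (nat \<Rightarrow> real) \<Rightarrow> real \<Rightarrow> real" where
  "ME_density p \<alpha> T s x = bilin p \<alpha> (mexp p (mscale x T)) s"

definition Tplus :: "rmat \<Rightarrow> rmat" where
  "Tplus T = (\<lambda>i j. if i = j then T i i else max 0 (T i j))"

definition Tminus :: "rmat \<Rightarrow> rmat" where
  "Tminus T = (\<lambda>i j. if i = j then 0 else max 0 (- T i j))"

definition splus :: "(nat \<Rightarrow> real) \<Rightarrow> nat \<Rightarrow> real" where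
  "splus s = (\<lambda>i. max 0 (s i))"

definition sminus :: "(nat \<Rightarrow> real) \<Rightarrow> nat \<Rightarrow> real" where
  "sminus s = (\<lambda>i. max 0 (- s i))"

definition lambda0 :: "nat \<Rightarrow> rmat \<Rightarrow> (nat \<Rightarrow> real) \<Rightarrow> real" where
  "lambda0 p T s = Inf {r. r \<ge> 0 \<and>
      (\<forall>i<p. T i i + (\<Sum>j\<in>{..<p} - {i}. \<bar>T i j\<bar>) + \<bar>s i\<bar> \<le> r)}"

definition wplus :: "nat \<Rightarrow> (nat \<Rightarrow> real) \<Rightarrow> real" where
  "wplus p \<alpha> = (\<Sum>i<p. max 0 (\<alpha> i))"

definition wminus :: "nat \<Rightarrow> (nat \<Rightarrow> real) \<Rightarrow> real" where
  "wminus p \<alpha> = (\<Sum>i<p. max 0 (- \<alpha> i))"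

definition alpha_plus :: "nat \<Rightarrow> (nat \<Rightarrow> real) \<Rightarrow> nat \<Rightarrow> real" where
  "alpha_plus p \<alpha> = (\<lambda>i. if wplus p \<alpha> > 0 then max 0 (\<alpha> i) / wplus p \<alpha> else 0)"

definition alpha_minus :: "nat \<Rightarrow> (nat \<Rightarrow> real) \<Rightarrow> nat \<Rightarrow> real" where
  "alpha_minus p \<alpha> = (\<lambda>i. if wminus p \<alpha> > 0 then max 0 (- \<alpha> i) / wminus p \<alpha> else 0)"

definition alpha_hat_plus :: "nat \<Rightarrow> (nat \<Rightarrow> real) \<Rightarrow> nat \<Rightarrow> real" where
  "alpha_hat_plus p \<alpha> = (\<lambda>i. wplus p \<alpha> / (wplus p \<alpha> + wminus p \<alpha>) * alpha_plus p \<alpha> i)"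

definition alpha_hat_minus :: "nat \<Rightarrow> (nat \<Rightarrow> real) \<Rightarrow> nat \<Rightarrow> real" where
  "alpha_hat_minus p \<alpha> = (\<lambda>i. wminus p \<alpha> / (wplus p \<alpha> + wminus p \<alpha>) * alpha_minus p \<alpha> i)"

text \<open>State coding: i^o = i (i<p), i^a = p+i (i<p), Delta^o = 2p, Delta^a = 2p+1,
  cemetery = 2p+2.  Total number of states 2p+3.\<close>

definition subG :: "nat \<Rightarrow> rmat \<Rightarrow> (nat \<Rightarrow> real) \<Rightarrow> real \<Rightarrow> rmat" where
  "subG p T s lam = (\<lambda>i j.
     if i < p then
       (if j < p then Tplus T i j - (if i = j then lam else 0)
        else if j < 2*p then Tminus T i (j - p)
        else if j = 2*p then splus s i
        else if j = 2*p+1 then sminus s i else 0)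
     else if i < 2*p then
       (if j < p then Tminus T (i - p) j
        else if j < 2*p then Tplus T (i - p) (j - p) - (if i - p = j - p then lam else 0)
        else if j = 2*p then sminus s (i - p)
        else if j = 2*p+1 then splus s (i - p) else 0)
     else 0)"

definition genQ :: "nat \<Rightarrow> rmat \<Rightarrow> (nat \<Rightarrow> real) \<Rightarrow> real \<Rightarrow> rmat" where
  "genQ p T s lam = (\<lambda>i j.
     if i < 2*p then
       (if j < 2*p+2 then subG p T s lam i j
        else if j = 2*p+2 then - (\<Sum>k<2*p+2. subG p T s lam i k) else 0)
     else 0)"

text \<open>The 2p x 2p block [[T^+ - lambda I, T^-],[T^-, T^+ - lambda I]].\<close>
definition blockG :: "nat \<Rightarrow> rmat \<Rightarrow> (nat \<Rightarrow> real) \<Rightarrow> real \<Rightarrow> rmat" where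
  "blockG p T s lam = (\<lambda>i j. if i < 2*p \<and> j < 2*p then subG p T s lam i j else 0)"

definition init_dist :: "nat \<Rightarrow> (nat \<Rightarrow> real) \<Rightarrow> nat \<Rightarrow> real" where
  "init_dist p \<alpha> = (\<lambda>i. if i < p then alpha_hat_plus p \<alpha> i
                         else if i < 2*p then alpha_hat_minus p \<alpha> (i - p) else 0)"

definition s_pm :: "nat \<Rightarrow> (nat \<Rightarrow> real) \<Rightarrow> nat \<Rightarrow> real" where
  "s_pm p s = (\<lambda>i. if i < p then s i else if i < 2*p then - s (i - p) else 0)"

definition is_MJP :: "'w measure \<Rightarrow> nat \<Rightarrow> rmat \<Rightarrow> (nat \<Rightarrow> real) \<Rightarrow> ('w \<Rightarrow> real \<Rightarrow> nat) \<Rightarrow> bool" where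
  "is_MJP M n Q \<pi> \<phi> \<longleftrightarrow>
     (\<forall>t. (\<lambda>\<omega>. \<phi> \<omega> t) \<in> measurable M (count_space UNIV)) \<and>
     (\<forall>\<omega>\<in>space M. \<forall>t\<ge>0. \<phi> \<omega> t < n) \<and>
     (\<forall>\<omega>\<in>space M. \<forall>t\<ge>0. \<exists>\<epsilon>>0. \<forall>u. t \<le> u \<and> u < t + \<epsilon> \<longrightarrow> \<phi> \<omega> u = \<phi> \<omega> t) \<and>
     (\<forall>m (ts :: nat \<Rightarrow> real) (st :: nat \<Rightarrow> nat).
        ts 0 = 0 \<and> (\<forall>k<m. ts k \<le> ts (Suc k)) \<longrightarrow>
        measure M {\<omega>\<in>space M. \<forall>k\<le>m. \<phi> \<omega> (ts k) = st k} =
          \<pi> (st 0) * (\<Prod>k<m. mexp n (mscale (ts (Suc k) - ts k) Q) (st k) (st (Suc k))))"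

text \<open>Transience of state i for the chain with generator Q (n states): finite expected
  occupation time of i when started in i, i.e. the integral of p_ii(t) over [0,oo)
  is finite.\<close>
definition transient_state :: "nat \<Rightarrow> rmat \<Rightarrow> nat \<Rightarrow> bool" where
  "transient_state n Q i \<longleftrightarrow>
     set_integrable lborel {0..} (\<lambda>t. mexp n (mscale t Q) i i)"

definition exits :: "nat \<Rightarrow> ('w \<Rightarrow> real \<Rightarrow> nat) \<Rightarrow> 'w \<Rightarrow> bool" where
  "exits p \<phi> \<omega> \<longleftrightarrow> (\<exists>x\<ge>0. \<phi> \<omega> x \<ge> 2*p)"

definition tau :: "nat \<Rightarrow> ('w \<Rightarrow> real \<Rightarrow> nat) \<Rightarrow> 'w \<Rightarrow> real" where
  "tau p \<phi> \<omega> = Inf {x. 0 \<le> x \<and> \<phi> \<omega> x \<ge> 2*p}"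

definition beta :: "nat \<Rightarrow> nat \<Rightarrow> real" where
  "beta p k = (if k = 2*p then 1 else if k = 2*p+1 then -1 else 0)"

text \<open>The signed measure B \<mapsto> E[1{tau \<in> B} beta(phi_tau)] (tau = \<infinity> contributes 0).\<close>
definition tau_measure :: "'w measure \<Rightarrow> nat \<Rightarrow> ('w \<Rightarrow> real \<Rightarrow> nat) \<Rightarrow> real set \<Rightarrow> real" where
  "tau_measure M p \<phi> B =
     (\<integral>\<omega>. (if exits p \<phi> \<omega> \<and> tau p \<phi> \<omega> \<in> B then beta p (\<phi> \<omega> (tau p \<phi> \<omega>)) else 0) \<partial>M)"

end

theory Submission
  imports Defs
begin

definition mvec :: "nat \<Rightarrow> rmat \<Rightarrow> (nat \<Rightarrow> real) \<Rightarrow> nat \<Rightarrow> real" where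
  "mvec n A u = (\<lambda>i. \<Sum>j<n. A i j * u j)"

lemma mpow_scale: "mpow n (mscale t A) m = mscale (t^m) (mpow n A m)"
proof (induction m)
  case 0 then show ?case by (auto simp: mscale_def mid_def fun_eq_iff)
next
  case (Suc m) then show ?case
    by (auto simp: mscale_def mmul_def sum_distrib_left algebra_simps fun_eq_iff intro!: sum.cong)
qed

lemma mpow_bound:
  assumes A: "\<And>k j. k<n \<Longrightarrow> j<n \<Longrightarrow> \<bar>A k j\<bar> \<le> a" and "j < n"
  shows "\<bar>mpow n A m i j\<bar> \<le> (real n * a)^m"
  using assms(2)
proof (induction m arbitrary: i j)
  case 0 then show ?case by (auto simp: mid_def)
next
  case (Suc m)
  have a0: "0 \<le> a" using A[of j j] Suc.prems by auto
  have "\<bar>mpow n A (Suc m) i j\<bar> = \<bar>\<Sum>k<n. mpow n A m i k * A k j\<bar>" by (simp add: mmul_def)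
  also have "\<dots> \<le> (\<Sum>k<n. \<bar>mpow n A m i k\<bar> * \<bar>A k j\<bar>)"
    by (rule order_trans[OF sum_abs]) (simp add: abs_mult)
  also have "\<dots> \<le> (\<Sum>k<n. (real n * a)^m * a)"
    by (intro sum_mono mult_mono Suc.IH A Suc.prems) (auto simp: a0)
  also have "\<dots> = (real n * a)^Suc m" by simp
  finally show ?case .
qed

lemma mpow_summable:
  assumes "j < n" shows "summable (\<lambda>m. mpow n A m i j / fact m)"
proof -
  define a where "a = (\<Sum>k<n. \<Sum>l<n. \<bar>A k l\<bar>)"
  have A: "\<bar>A k l\<bar> \<le> a" if "k<n" "l<n" for k l
  proof -
    have "\<bar>A k l\<bar> \<le> (\<Sum>l<n. \<bar>A k l\<bar>)" using that by (intro member_le_sum) auto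
    also have "\<dots> \<le> a" unfolding a_def using that
      by (intro member_le_sum[where f="\<lambda>k. \<Sum>l<n. \<bar>A k l\<bar>"]) auto
    finally show ?thesis .
  qed
  show ?thesis
  proof (rule summable_comparison_test')
    show "summable (\<lambda>m. inverse (fact m) * (real n * a)^m)" by (rule summable_exp)
    fix m :: nat
    show "norm (mpow n A m i j / fact m) \<le> inverse (fact m) * (real n * a)^m"
      using mpow_bound[OF A assms, where m=m and i=i]
      by (simp add: divide_inverse abs_mult mult.commute mult_left_mono)
  qed
qed

lemma mexp_powser: "mexp n (mscale t A) i j = (\<Sum>m. (mpow n A m i j / fact m) * t^m)"
  unfolding mexp_def mpow_scale by (simp add: mscale_def algebra_simps)

lemma mexp_deriv:
  assumes "k < n"
  shows "DERIV (\<lambda>t. mexp n (mscale t A) i k) t :> (\<Sum>j<n. mexp n (mscale t A) i j * A j k)"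
proof -
  define c where "c m = mpow n A m i k / fact m" for m
  define K where "K = \<bar>t\<bar> + 1"
  have sm: "summable (\<lambda>m. c m * K^m)"
    using mpow_summable[OF assms, of "mscale K A" i] unfolding mpow_scale
    by (simp add: c_def mpow_scale mscale_def algebra_simps)
  have D: "DERIV (\<lambda>x. \<Sum>m. c m * x^m) t :> (\<Sum>m. diffs c m * t^m)"
    by (rule termdiffs_strong[OF sm]) (simp add: K_def)
  have dc0: "diffs c m = mpow n A (Suc m) i k / fact m" for m
    by (simp add: diffs_def c_def fact_Suc del: mpow.simps)
  have dc: "diffs c m * t^m = (\<Sum>j<n. (mpow n A m i j / fact m * t^m) * A j k)" for m
    unfolding dc0 by (simp add: mmul_def sum_divide_distrib sum_distrib_right sum_distrib_left algebra_simps)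
  have "(\<Sum>m. diffs c m * t^m) = (\<Sum>m. \<Sum>j<n. (mpow n A m i j / fact m * t^m) * A j k)"
    by (simp add: dc)
  also have "\<dots> = (\<Sum>j<n. \<Sum>m. (mpow n A m i j / fact m * t^m) * A j k)"
  proof (rule suminf_sum)
    fix j assume "j \<in> {..<n}"
    then have "summable (\<lambda>m. mpow n (mscale t A) m i j / fact m)" by (intro mpow_summable) auto
    then show "summable (\<lambda>m. (mpow n A m i j / fact m * t^m) * A j k)"
      unfolding mpow_scale by (intro summable_mult2) (simp add: mscale_def algebra_simps)
  qed
  also have "\<dots> = (\<Sum>j<n. mexp n (mscale t A) i j * A j k)"
  proof (rule sum.cong[OF refl])
    fix j assume "j \<in> {..<n}"
    then have "summable (\<lambda>m. mpow n (mscale t A) m i j / fact m)" by (intro mpow_summable) auto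
    then have S: "summable (\<lambda>m. mpow n A m i j / fact m * t^m)"
      unfolding mpow_scale by (simp add: mscale_def algebra_simps)
    show "(\<Sum>m. (mpow n A m i j / fact m * t^m) * A j k) = mexp n (mscale t A) i j * A j k"
      unfolding mexp_powser by (rule suminf_mult2[OF S, symmetric])
  qed
  finally show ?thesis using D by (simp add: mexp_powser[abs_def] c_def)
qed

lemma sum_split2: "(\<Sum>j<2*(p::nat). f j) = (\<Sum>j<p. f j) + (\<Sum>j<p. f (j+p))"
proof -
  have e: "{..<2*p} = {..<p} \<union> {p..<2*p}" by auto
  have "(\<Sum>j<2*p. f j) = (\<Sum>j<p. f j) + (\<Sum>j\<in>{p..<2*p}. f j)"
    unfolding e by (subst sum.union_disjoint) auto
  also have "(\<Sum>j\<in>{p..<2*p}. f j) = (\<Sum>j<p. f (j+p))"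
    using sum.atLeastLessThan_shift_bounds[of f 0 p p] by (simp add: mult_2 atLeast0LessThan add.commute)
  finally show ?thesis .
qed

lemma mexp_zero: "mexp n (mscale 0 A) i k = mid i k"
  unfolding mexp_powser using powser_zero[of "\<lambda>m. mpow n A m i k / fact m"] by simp

lemma mpow_absorb:
  assumes "\<And>j. A a j = 0"
  shows "mpow n A m a b = (if m = 0 then mid a b else 0)"
proof (induction m arbitrary: b)
  case 0 then show ?case by simp
next
  case (Suc m)
  have "mpow n A m a l * A l b = 0" for l
    using Suc.IH[of l] assms by (auto simp: mid_def)
  then have "(\<Sum>l<n. mpow n A m a l * A l b) = 0" by (intro sum.neutral) blast
  then show ?case by (simp add: mmul_def)
qed

lemma mexp_absorb:
  assumes "\<And>j. A a j = 0"
  shows "mexp n (mscale h A) a b = mid a b"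
proof -
  have "mpow n (mscale h A) m a b / fact m = (if m = 0 then mid a b else 0)" for m
    by (subst mpow_absorb[where a=a]) (auto simp: assms mscale_def)
  then have "(\<lambda>m. mpow n (mscale h A) m a b / fact m) = (\<lambda>r. if r = 0 then mid a b else 0)"
    by (intro ext) simp
  then have "(\<lambda>m. mpow n (mscale h A) m a b / fact m) sums mid a b"
    using sums_single[of 0 "\<lambda>_. mid a b"] by simp
  then show ?thesis by (simp add: mexp_def sums_iff)
qed

lemma mpow_block:
  assumes "r \<le> n" and Z: "\<And>l j. r \<le> l \<Longrightarrow> l < n \<Longrightarrow> j < r \<Longrightarrow> A l j = 0"
    and E: "\<And>l j. l < r \<Longrightarrow> j < r \<Longrightarrow> B l j = A l j"
    and "i < r" "j < r"
  shows "mpow n A m i j = mpow r B m i j"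
  using assms(5)
proof (induction m arbitrary: j)
  case 0 then show ?case by simp
next
  case (Suc m)
  have "(\<Sum>l<n. mpow n A m i l * A l j) = (\<Sum>l<r. mpow n A m i l * A l j)"
    using assms(1) Z Suc.prems by (intro sum.mono_neutral_right) auto
  also have "\<dots> = (\<Sum>l<r. mpow r B m i l * B l j)"
    using Suc.IH E Suc.prems by (intro sum.cong) auto
  finally show ?case by (simp add: mmul_def)
qed

lemma mexp_block:
  assumes "r \<le> n" and Z: "\<And>l j. r \<le> l \<Longrightarrow> l < n \<Longrightarrow> j < r \<Longrightarrow> A l j = 0"
    and E: "\<And>l j. l < r \<Longrightarrow> j < r \<Longrightarrow> B l j = A l j"
    and "i < r" "j < r"
  shows "mexp n (mscale t A) i j = mexp r (mscale t B) i j"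
  unfolding mexp_def
  by (subst mpow_block[OF assms(1) _ _ assms(4,5), where B="mscale t B"])
     (auto simp: mscale_def Z E)

lemma mvec_pow_Suc: "mvec n (mpow n A (Suc m)) u = mvec n (mpow n A m) (mvec n A u)"
proof (rule ext)
  fix i
  have "(\<Sum>j<n. (\<Sum>l<n. mpow n A m i l * A l j) * u j) = (\<Sum>j<n. \<Sum>l<n. mpow n A m i l * A l j * u j)"
    by (simp add: sum_distrib_right)
  also have "\<dots> = (\<Sum>l<n. \<Sum>j<n. mpow n A m i l * A l j * u j)" by (rule sum.swap)
  also have "\<dots> = (\<Sum>l<n. mpow n A m i l * (\<Sum>j<n. A l j * u j))"
    by (simp add: sum_distrib_left mult.assoc)
  finally show "mvec n (mpow n A (Suc m)) u i = mvec n (mpow n A m) (mvec n A u) i"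
    by (simp add: mvec_def mmul_def)
qed

lemma mvec_mexp:
  "mvec n (mexp n A) u i = (\<Sum>m. mvec n (mpow n A m) u i / fact m)"
proof -
  have "mvec n (mexp n A) u i = (\<Sum>j<n. \<Sum>m. mpow n A m i j / fact m * u j)"
    unfolding mvec_def mexp_def
    by (rule sum.cong[OF refl], rule suminf_mult2, rule mpow_summable) simp
  also have "\<dots> = (\<Sum>m. \<Sum>j<n. mpow n A m i j / fact m * u j)"
    by (intro suminf_sum[symmetric] summable_mult2 mpow_summable) auto
  also have "\<dots> = (\<Sum>m. mvec n (mpow n A m) u i / fact m)"
    by (simp add: mvec_def sum_divide_distrib algebra_simps)
  finally show ?thesis .
qed

lemma summable_mvec: "summable (\<lambda>m. mvec n (mpow n A m) u i / fact m)"
proof -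
  have "summable (\<lambda>m. \<Sum>j<n. mpow n A m i j / fact m * u j)"
    by (intro summable_sum summable_mult2 mpow_summable) auto
  then show ?thesis by (simp add: mvec_def sum_divide_distrib algebra_simps)
qed

definition TL :: "real \<Rightarrow> rmat \<Rightarrow> rmat" where
  "TL lam T = (\<lambda>i j. T i j - (if i = j then lam else 0))"

lemma Tpm: "Tplus T i j - Tminus T i j = T i j"
  by (auto simp: Tplus_def Tminus_def)

lemma blockG_11: "i < p \<Longrightarrow> j < p \<Longrightarrow> blockG p T s lam i j = Tplus T i j - (if i = j then lam else 0)"
  by (simp add: blockG_def subG_def)
lemma blockG_12: "i < p \<Longrightarrow> j < p \<Longrightarrow> blockG p T s lam i (j+p) = Tminus T i j"
  by (simp add: blockG_def subG_def)
lemma blockG_21: "i < p \<Longrightarrow> j < p \<Longrightarrow> blockG p T s lam (i+p) j = Tminus T i j"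
  by (simp add: blockG_def subG_def)
lemma blockG_22: "i < p \<Longrightarrow> j < p \<Longrightarrow> blockG p T s lam (i+p) (j+p) = Tplus T i j - (if i = j then lam else 0)"
  by (simp add: blockG_def subG_def)
lemma s_pm_1: "j < p \<Longrightarrow> s_pm p u j = u j" by (simp add: s_pm_def)
lemma s_pm_2: "j < p \<Longrightarrow> s_pm p u (j+p) = - u j" by (simp add: s_pm_def)

lemma TL_pm: "x * (Tplus T i j - (if i = j then lam else 0)) * u + x * Tminus T i j * (- u) = x * TL lam T i j * u"
proof -
  have e: "Tplus T i j = T i j + Tminus T i j" using Tpm[of T i j] by simp
  show ?thesis by (simp add: e TL_def algebra_simps)
qed

lemma TL_pm2: "x * Tminus T i j * u + x * (Tplus T i j - (if i = j then lam else 0)) * (- u) = - (x * TL lam T i j * u)"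
proof -
  have e: "Tplus T i j = T i j + Tminus T i j" using Tpm[of T i j] by simp
  show ?thesis by (simp add: e TL_def algebra_simps)
qed

lemma mvec_block_spm:
  "mvec (2*p) (mscale x (blockG p T s lam)) (s_pm p u) = s_pm p (mvec p (mscale x (TL lam T)) u)"
proof (rule ext)
  fix i
  show "mvec (2*p) (mscale x (blockG p T s lam)) (s_pm p u) i = s_pm p (mvec p (mscale x (TL lam T)) u) i"
  proof (cases "i < p")
    case True
    have "mvec (2*p) (mscale x (blockG p T s lam)) (s_pm p u) i
       = (\<Sum>j<p. x * (Tplus T i j - (if i = j then lam else 0)) * u j) + (\<Sum>j<p. x * Tminus T i j * (- u j))"
      unfolding mvec_def sum_split2 using True
      by (intro arg_cong2[where f="(+)"] sum.cong refl) (simp_all add: mscale_def blockG_11 blockG_12 s_pm_1 s_pm_2)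
    also have "\<dots> = (\<Sum>j<p. x * TL lam T i j * u j)"
      unfolding sum.distrib[symmetric] by (intro sum.cong refl) (rule TL_pm)
    finally show ?thesis using True by (simp add: s_pm_def mvec_def mscale_def)
  next
    case False
    show ?thesis
    proof (cases "i < 2*p")
      case True
      then obtain i' where i': "i = i' + p" "i' < p" using False by (metis add.commute le_Suc_ex mult_2 nat_add_left_cancel_less not_less)
      have "mvec (2*p) (mscale x (blockG p T s lam)) (s_pm p u) i
         = (\<Sum>j<p. x * Tminus T i' j * u j) + (\<Sum>j<p. x * (Tplus T i' j - (if i' = j then lam else 0)) * (- u j))"
        unfolding mvec_def sum_split2 using i'
        by (intro arg_cong2[where f="(+)"] sum.cong refl) (simp_all add: mscale_def blockG_21 blockG_22 s_pm_1 s_pm_2)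
      also have "\<dots> = - (\<Sum>j<p. x * TL lam T i' j * u j)"
        unfolding sum_negf[symmetric] sum.distrib[symmetric] by (intro sum.cong refl) (rule TL_pm2)
      finally show ?thesis using i' by (simp add: s_pm_def mvec_def mscale_def)
    next
      case False
      then show ?thesis by (simp add: s_pm_def mvec_def mscale_def blockG_def)
    qed
  qed
qed

lemma mvec_mid: "mvec n mid u i = (if i < n then u i else 0)"
proof -
  have "(\<Sum>j<n. mid i j * u j) = (\<Sum>j<n. if i = j then u j else 0)"
    by (rule sum.cong) (auto simp: mid_def)
  then show ?thesis by (simp add: mvec_def)
qed

lemma mvec_pow_spm:
  "mvec (2*p) (mpow (2*p) (mscale x (blockG p T s lam)) m) (s_pm p u)
   = s_pm p (mvec p (mpow p (mscale x (TL lam T)) m) u)"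
proof (induction m arbitrary: u)
  case 0 show ?case by (auto simp: mvec_mid s_pm_def fun_eq_iff)
next
  case (Suc m) show ?case
    unfolding mvec_pow_Suc mvec_block_spm Suc.IH ..
qed

lemma mvec_mexp_spm:
  "mvec (2*p) (mexp (2*p) (mscale x (blockG p T s lam))) (s_pm p u)
   = s_pm p (mvec p (mexp p (mscale x (TL lam T))) u)"
proof (rule ext)
  fix i
  have "mvec (2*p) (mexp (2*p) (mscale x (blockG p T s lam))) (s_pm p u) i
       = (\<Sum>m. s_pm p (mvec p (mpow p (mscale x (TL lam T)) m) u) i / fact m)"
    unfolding mvec_mexp mvec_pow_spm ..
  also have "\<dots> = s_pm p (mvec p (mexp p (mscale x (TL lam T))) u) i"
  proof -
    have S: "summable (\<lambda>m. mvec p (mpow p (mscale x (TL lam T)) m) u j / fact m)" for j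
      by (rule summable_mvec)
    show ?thesis
      unfolding mvec_mexp s_pm_def
      using suminf_minus[OF S, of "i-p"]
      by (auto simp: if_distrib cong: if_cong)
  qed
  finally show "mvec (2*p) (mexp (2*p) (mscale x (blockG p T s lam))) (s_pm p u) i
       = s_pm p (mvec p (mexp p (mscale x (TL lam T))) u) i" .
qed

lemma bilin_mvec: "bilin n a A v = (\<Sum>i<n. a i * mvec n A v i)"
  by (simp add: bilin_def mvec_def sum_distrib_left algebra_simps)

lemma wplus_nonneg: "0 \<le> wplus p \<alpha>" by (simp add: wplus_def sum_nonneg)
lemma wminus_nonneg: "0 \<le> wminus p \<alpha>" by (simp add: wminus_def sum_nonneg)

lemma wplus_zero: "wplus p \<alpha> = 0 \<Longrightarrow> i < p \<Longrightarrow> max 0 (\<alpha> i) = 0"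
  unfolding wplus_def by (subst (asm) sum_nonneg_eq_0_iff) auto
lemma wminus_zero: "wminus p \<alpha> = 0 \<Longrightarrow> i < p \<Longrightarrow> max 0 (- \<alpha> i) = 0"
  unfolding wminus_def by (subst (asm) sum_nonneg_eq_0_iff) auto

lemma hat_plus: assumes "wplus p \<alpha> + wminus p \<alpha> \<noteq> 0" "i < p"
  shows "(wplus p \<alpha> + wminus p \<alpha>) * alpha_hat_plus p \<alpha> i = max 0 (\<alpha> i)"
proof (cases "wplus p \<alpha> > 0")
  case True then show ?thesis using assms by (simp add: alpha_hat_plus_def alpha_plus_def)
next
  case False then have "wplus p \<alpha> = 0" using wplus_nonneg[of p \<alpha>] by linarith
  then show ?thesis using wplus_zero[of p \<alpha> i] assms by (simp add: alpha_hat_plus_def alpha_plus_def)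
qed

lemma hat_minus: assumes "wplus p \<alpha> + wminus p \<alpha> \<noteq> 0" "i < p"
  shows "(wplus p \<alpha> + wminus p \<alpha>) * alpha_hat_minus p \<alpha> i = max 0 (- \<alpha> i)"
proof (cases "wminus p \<alpha> > 0")
  case True then show ?thesis using assms by (simp add: alpha_hat_minus_def alpha_minus_def)
next
  case False then have "wminus p \<alpha> = 0" using wminus_nonneg[of p \<alpha>] by linarith
  then show ?thesis using wminus_zero[of p \<alpha> i] assms by (simp add: alpha_hat_minus_def alpha_minus_def)
qed

lemma bilin_spm:
  "(wplus p \<alpha> + wminus p \<alpha>) *
     bilin (2*p) (init_dist p \<alpha>) (mexp (2*p) (mscale x (blockG p T s lam))) (s_pm p s)
   = bilin p \<alpha> (mexp p (mscale x (TL lam T))) s"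
proof -
  define v where "v = mvec p (mexp p (mscale x (TL lam T))) s"
  define w where "w = wplus p \<alpha> + wminus p \<alpha>"
  have L: "bilin (2*p) (init_dist p \<alpha>) (mexp (2*p) (mscale x (blockG p T s lam))) (s_pm p s)
      = (\<Sum>i<p. alpha_hat_plus p \<alpha> i * v i) + (\<Sum>i<p. alpha_hat_minus p \<alpha> i * (- v i))"
    unfolding bilin_mvec mvec_mexp_spm sum_split2 v_def
    by (intro arg_cong2[where f="(+)"] sum.cong refl) (simp_all add: init_dist_def s_pm_1 s_pm_2)
  show ?thesis
  proof (cases "w = 0")
    case True
    then have "wplus p \<alpha> = 0" "wminus p \<alpha> = 0" using wplus_nonneg[of p \<alpha>] wminus_nonneg[of p \<alpha>]
      unfolding w_def by linarith+
    then have "\<alpha> i = 0" if "i < p" for i using wplus_zero[of p \<alpha> i] wminus_zero[of p \<alpha> i] that by linarith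
    then have "bilin p \<alpha> (mexp p (mscale x (TL lam T))) s = 0" by (simp add: bilin_def)
    then show ?thesis using True unfolding w_def by simp
  next
    case False
    have "w * ((\<Sum>i<p. alpha_hat_plus p \<alpha> i * v i) + (\<Sum>i<p. alpha_hat_minus p \<alpha> i * (- v i)))
        = (\<Sum>i<p. (w * alpha_hat_plus p \<alpha> i - w * alpha_hat_minus p \<alpha> i) * v i)"
      by (simp add: sum_distrib_left sum.distrib[symmetric] sum_subtractf[symmetric] algebra_simps)
    also have "\<dots> = (\<Sum>i<p. \<alpha> i * v i)"
      using False hat_plus[of p \<alpha>] hat_minus[of p \<alpha>] unfolding w_def
      by (intro sum.cong refl) (simp, smt (verit))
    finally show ?thesis unfolding L[symmetric] w_def[symmetric] by (simp add: bilin_mvec v_def)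
  qed
qed

definition RC :: "(real \<Rightarrow> nat) \<Rightarrow> bool" where
  "RC f \<longleftrightarrow> (\<forall>t\<ge>0. \<exists>\<epsilon>>0. \<forall>u. t \<le> u \<and> u < t + \<epsilon> \<longrightarrow> f u = f t)"

lemma RC_D: assumes "RC f" "0 \<le> t" obtains \<epsilon> where "\<epsilon> > 0" "\<And>u. t \<le> u \<Longrightarrow> u < t + \<epsilon> \<Longrightarrow> f u = f t"
  using assms unfolding RC_def by blast

lemma inf_attained:
  fixes f :: "real \<Rightarrow> nat"
  assumes rc: "RC f" and ex: "\<exists>x\<ge>0. c \<le> f x"
  shows "0 \<le> Inf {x. 0\<le>x \<and> c \<le> f x} \<and> c \<le> f (Inf {x. 0\<le>x \<and> c \<le> f x})"
proof -
  define S where "S = {x. 0\<le>x \<and> c \<le> f x}"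
  have ne: "S \<noteq> {}" using ex by (auto simp: S_def)
  have bdd: "bdd_below S" by (rule bdd_belowI[of _ 0]) (auto simp: S_def)
  have t0: "0 \<le> Inf S" using ne by (intro cInf_greatest) (auto simp: S_def)
  moreover have "c \<le> f (Inf S)"
  proof (rule ccontr)
    assume a: "\<not> c \<le> f (Inf S)"
    obtain \<epsilon> where e: "\<epsilon> > 0" "\<And>u. Inf S \<le> u \<Longrightarrow> u < Inf S + \<epsilon> \<Longrightarrow> f u = f (Inf S)"
      using RC_D[OF rc t0] by blast
    have "Inf S < Inf S + \<epsilon>" using e by simp
    then obtain x where x: "x \<in> S" "x < Inf S + \<epsilon>" using cInf_less_iff[OF ne bdd] by blast
    have "Inf S \<le> x" using x bdd by (intro cInf_lower) auto
    then have "f x = f (Inf S)" using e x by blast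
    then show False using x a by (auto simp: S_def)
  qed
  ultimately show ?thesis by (simp add: S_def)
qed

lemma good_const:
  fixes f :: "real \<Rightarrow> nat"
  assumes rc: "RC f" and G: "\<forall>q\<in>\<rat>. \<forall>r\<in>\<rat>. 0 \<le> q \<longrightarrow> q \<le> r \<longrightarrow> c \<le> f q \<longrightarrow> f r = f q"
    and x: "0 \<le> x" "c \<le> f x" "x \<le> y"
  shows "f y = f x"
proof -
  obtain e1 where e1: "e1 > 0" "\<And>u. x \<le> u \<Longrightarrow> u < x + e1 \<Longrightarrow> f u = f x" using RC_D[OF rc x(1)] by blast
  have y0: "0 \<le> y" using x by linarith
  obtain e2 where e2: "e2 > 0" "\<And>u. y \<le> u \<Longrightarrow> u < y + e2 \<Longrightarrow> f u = f y" using RC_D[OF rc y0] by blast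
  obtain r where r: "r \<in> \<rat>" "y < r" "r < y + e2" using Rats_dense_in_real[of y "y+e2"] e2(1) by auto
  obtain q where q: "q \<in> \<rat>" "x < q" "q < min (x + e1) r" using Rats_dense_in_real[of x "min (x+e1) r"] e1(1) r(2) x(3) by auto
  have fq: "f q = f x" using e1(2)[of q] q by linarith
  have fr: "f r = f y" using e2(2)[of r] r by linarith
  have "0 \<le> q \<longrightarrow> q \<le> r \<longrightarrow> c \<le> f q \<longrightarrow> f r = f q" using G q(1) r(1) by blast
  then have "f r = f q" using q r x fq by linarith
  then show ?thesis using fq fr by (metis)
qed

lemma exits_rat:
  fixes f :: "real \<Rightarrow> nat"
  assumes rc: "RC f"
  shows "(\<exists>x\<ge>0. c \<le> f x) \<longleftrightarrow> (\<exists>q\<in>\<rat>. 0 \<le> q \<and> c \<le> f q)"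
proof
  assume "\<exists>x\<ge>0. c \<le> f x"
  then obtain x where x: "0 \<le> x" "c \<le> f x" by blast
  obtain e where e: "e > 0" "\<And>u. x \<le> u \<Longrightarrow> u < x + e \<Longrightarrow> f u = f x" using RC_D[OF rc x(1)] by blast
  obtain q where q: "q \<in> \<rat>" "x < q" "q < x + e" using Rats_dense_in_real[of x "x+e"] e(1) by auto
  have "f q = f x" using e(2)[of q] q by linarith
  then show "\<exists>q\<in>\<rat>. 0 \<le> q \<and> c \<le> f q" using q x by (intro bexI[of _ q]) auto
qed auto

lemma tau_less_rat:
  fixes f :: "real \<Rightarrow> nat"
  assumes rc: "RC f" and ex: "\<exists>x\<ge>0. c \<le> f x"
  shows "Inf {x. 0\<le>x \<and> c \<le> f x} < a \<longleftrightarrow> (\<exists>q\<in>\<rat>. 0 \<le> q \<and> q < a \<and> c \<le> f q)"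
proof -
  define S where "S = {x. 0\<le>x \<and> c \<le> f x}"
  have bdd: "bdd_below S" by (rule bdd_belowI[of _ 0]) (auto simp: S_def)
  have att: "0 \<le> Inf S" "c \<le> f (Inf S)" using inf_attained[OF rc ex] by (auto simp: S_def)
  show ?thesis unfolding S_def[symmetric]
  proof
    assume "Inf S < a"
    obtain e where e: "e > 0" "\<And>u. Inf S \<le> u \<Longrightarrow> u < Inf S + e \<Longrightarrow> f u = f (Inf S)"
      using RC_D[OF rc att(1)] by blast
    obtain q where q: "q \<in> \<rat>" "Inf S < q" "q < min (Inf S + e) a"
      using Rats_dense_in_real[of "Inf S" "min (Inf S + e) a"] e(1) \<open>Inf S < a\<close> by auto
    have "f q = f (Inf S)" using e(2)[of q] q by linarith
    then show "\<exists>q\<in>\<rat>. 0 \<le> q \<and> q < a \<and> c \<le> f q" using q att by (intro bexI[of _ q]) auto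
  next
    assume "\<exists>q\<in>\<rat>. 0 \<le> q \<and> q < a \<and> c \<le> f q"
    then obtain q where "q \<in> S" "q < a" by (auto simp: S_def)
    then show "Inf S < a" using cInf_lower[OF _ bdd, of q] by linarith
  qed
qed

lemma tau_state_rat:
  fixes f :: "real \<Rightarrow> nat"
  assumes rc: "RC f" and ex: "\<exists>x\<ge>0. c \<le> f x" and ck: "c \<le> k"
  shows "f (Inf {x. 0\<le>x \<and> c \<le> f x}) = k \<longleftrightarrow>
    (\<exists>q\<in>\<rat>. 0 \<le> q \<and> f q = k \<and> (\<forall>q'\<in>\<rat>. 0 \<le> q' \<longrightarrow> q' \<le> q \<longrightarrow> c \<le> f q' \<longrightarrow> f q' = k))"
proof -
  define S where "S = {x. 0\<le>x \<and> c \<le> f x}"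
  have bdd: "bdd_below S" by (rule bdd_belowI[of _ 0]) (auto simp: S_def)
  have att: "0 \<le> Inf S" "c \<le> f (Inf S)" using inf_attained[OF rc ex] by (auto simp: S_def)
  obtain e where e: "e > 0" "\<And>u. Inf S \<le> u \<Longrightarrow> u < Inf S + e \<Longrightarrow> f u = f (Inf S)"
    using RC_D[OF rc att(1)] by blast
  show ?thesis unfolding S_def[symmetric]
  proof
    assume k: "f (Inf S) = k"
    obtain q where q: "q \<in> \<rat>" "Inf S < q" "q < Inf S + e"
      using Rats_dense_in_real[of "Inf S" "Inf S + e"] e(1) by auto
    have A: "f q' = k" if "q' \<in> \<rat>" "0 \<le> q'" "q' \<le> q" "c \<le> f q'" for q'
    proof -
      have "q' \<in> S" using that by (auto simp: S_def)
      then have "Inf S \<le> q'" using bdd by (intro cInf_lower)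
      then show ?thesis using e(2)[of q'] q that k by linarith
    qed
    have fqk: "f q = k" using e(2)[of q] q k by linarith
    show "\<exists>q\<in>\<rat>. 0 \<le> q \<and> f q = k \<and> (\<forall>q'\<in>\<rat>. 0 \<le> q' \<longrightarrow> q' \<le> q \<longrightarrow> c \<le> f q' \<longrightarrow> f q' = k)"
    proof (rule bexI[of _ q], intro conjI ballI impI)
      show "0 \<le> q" using q att by linarith
      show "f q = k" by (fact fqk)
      show "q \<in> \<rat>" by (fact q(1))
      fix q' assume "q' \<in> \<rat>" "0 \<le> q'" "q' \<le> q" "c \<le> f q'"
      then show "f q' = k" by (rule A)
    qed
  next
    assume "\<exists>q\<in>\<rat>. 0 \<le> q \<and> f q = k \<and> (\<forall>q'\<in>\<rat>. 0 \<le> q' \<longrightarrow> q' \<le> q \<longrightarrow> c \<le> f q' \<longrightarrow> f q' = k)"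
    then obtain q where q: "q \<in> \<rat>" "0 \<le> q" "f q = k"
      and all: "\<And>q'. q' \<in> \<rat> \<Longrightarrow> 0 \<le> q' \<Longrightarrow> q' \<le> q \<Longrightarrow> c \<le> f q' \<Longrightarrow> f q' = k" by blast
    have "q \<in> S" using q ck by (auto simp: S_def)
    then have le: "Inf S \<le> q" using bdd by (intro cInf_lower)
    show "f (Inf S) = k"
    proof (cases "Inf S = q")
      case True then show ?thesis using q by simp
    next
      case False
      then have "Inf S < q" using le by simp
      then obtain q' where q': "q' \<in> \<rat>" "Inf S < q'" "q' < min (Inf S + e) q"
        using Rats_dense_in_real[of "Inf S" "min (Inf S + e) q"] e(1) by auto
      have "f q' = f (Inf S)" using e(2)[of q'] q' by linarith
      then have "f q' = k" using all[of q'] q' att by auto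
      then show ?thesis using \<open>f q' = f (Inf S)\<close> by simp
    qed
  qed
qed

lemma good_equiv:
  fixes f :: "real \<Rightarrow> nat"
  assumes rc: "RC f" and G: "\<forall>q\<in>\<rat>. \<forall>r\<in>\<rat>. 0 \<le> q \<longrightarrow> q \<le> r \<longrightarrow> c \<le> f q \<longrightarrow> f r = f q"
    and t: "0 \<le> t" and ck: "c \<le> k"
  shows "((\<exists>x\<ge>0. c \<le> f x) \<and> Inf {x. 0\<le>x \<and> c \<le> f x} \<le> t \<and> f (Inf {x. 0\<le>x \<and> c \<le> f x}) = k)
         \<longleftrightarrow> f t = k"
proof -
  define S where "S = {x. 0\<le>x \<and> c \<le> f x}"
  have bdd: "bdd_below S" by (rule bdd_belowI[of _ 0]) (auto simp: S_def)
  show ?thesis unfolding S_def[symmetric]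
  proof
    assume a: "(\<exists>x\<ge>0. c \<le> f x) \<and> Inf S \<le> t \<and> f (Inf S) = k"
    then have att: "0 \<le> Inf S" "c \<le> f (Inf S)" using inf_attained[OF rc] by (auto simp: S_def)
    have "f t = f (Inf S)" using good_const[OF rc G att, of t] a by blast
    then show "f t = k" using a by simp
  next
    assume ft: "f t = k"
    then have ex: "\<exists>x\<ge>0. c \<le> f x" using t ck by auto
    have att: "0 \<le> Inf S" "c \<le> f (Inf S)" using inf_attained[OF rc ex] by (auto simp: S_def)
    have "t \<in> S" using t ft ck by (auto simp: S_def)
    then have le: "Inf S \<le> t" using bdd by (intro cInf_lower)
    have "f t = f (Inf S)" using good_const[OF rc G att le] .
    then show "(\<exists>x\<ge>0. c \<le> f x) \<and> Inf S \<le> t \<and> f (Inf S) = k" using ex le ft by simp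
  qed
qed

lemma all_le1: "(\<forall>j::nat. j \<le> 1 \<longrightarrow> P j) \<longleftrightarrow> P 0 \<and> P 1"
  by (metis le_Suc_eq le_zero_eq One_nat_def)
lemma all_le2: "(\<forall>j::nat. j \<le> 2 \<longrightarrow> P j) \<longleftrightarrow> P 0 \<and> P 1 \<and> P 2"
  by (metis le_Suc_eq le_zero_eq One_nat_def numeral_2_eq_2)

locale mjp =
  fixes M :: "'w measure" and n :: nat and Q :: rmat and \<pi> :: "nat \<Rightarrow> real"
    and \<phi> :: "'w \<Rightarrow> real \<Rightarrow> nat" and p :: nat
  assumes prob: "prob_space M" and mjp: "is_MJP M n Q \<pi> \<phi>"
    and Z: "\<And>a j. 2*p \<le> a \<Longrightarrow> Q a j = 0"
begin

sublocale prob_space M by (rule prob)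

lemma meas: "(\<lambda>\<omega>. \<phi> \<omega> t) \<in> measurable M (count_space UNIV)"
  using mjp unfolding is_MJP_def by blast

lemma rng: "\<omega> \<in> space M \<Longrightarrow> 0 \<le> t \<Longrightarrow> \<phi> \<omega> t < n"
  using mjp unfolding is_MJP_def by blast

lemma rc: "\<omega> \<in> space M \<Longrightarrow> RC (\<phi> \<omega>)"
  using mjp unfolding is_MJP_def RC_def by blast

lemma fdd: "ts 0 = 0 \<Longrightarrow> (\<forall>k<m. ts k \<le> ts (Suc k)) \<Longrightarrow>
   measure M {\<omega>\<in>space M. \<forall>k\<le>m. \<phi> \<omega> (ts k) = st k} =
   \<pi> (st 0) * (\<Prod>k<m. mexp n (mscale (ts (Suc k) - ts k) Q) (st k) (st (Suc k)))"
  using mjp unfolding is_MJP_def by blast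

lemma sets_phi: "{\<omega>\<in>space M. P (\<phi> \<omega> t)} \<in> sets M"
proof -
  have "{\<omega>\<in>space M. P (\<phi> \<omega> t)} = (\<lambda>\<omega>. \<phi> \<omega> t) -` {x. P x} \<inter> space M" by auto
  also have "\<dots> \<in> sets M" by (rule measurable_sets[OF meas]) simp
  finally show ?thesis .
qed

lemma fdd1:
  assumes "0 \<le> t"
  shows "measure M {\<omega>\<in>space M. \<phi> \<omega> 0 = i \<and> \<phi> \<omega> t = k} = \<pi> i * mexp n (mscale t Q) i k"
proof -
  define ts :: "nat \<Rightarrow> real" where "ts j = (if j = 0 then 0 else t)" for j
  define st :: "nat \<Rightarrow> nat" where "st j = (if j = 0 then i else k)" for j
  have "measure M {\<omega>\<in>space M. \<forall>j\<le>1. \<phi> \<omega> (ts j) = st j} =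
     \<pi> (st 0) * (\<Prod>j<1. mexp n (mscale (ts (Suc j) - ts j) Q) (st j) (st (Suc j)))"
    by (rule fdd) (auto simp: ts_def assms)
  moreover have "{\<omega>\<in>space M. \<forall>j\<le>1. \<phi> \<omega> (ts j) = st j} = {\<omega>\<in>space M. \<phi> \<omega> 0 = i \<and> \<phi> \<omega> t = k}"
    unfolding all_le1 by (auto simp: ts_def st_def)
  ultimately show ?thesis by (simp add: ts_def st_def)
qed

lemma fdd2:
  assumes "0 \<le> q" "q \<le> r"
  shows "measure M {\<omega>\<in>space M. \<phi> \<omega> 0 = i \<and> \<phi> \<omega> q = a \<and> \<phi> \<omega> r = b}
     = \<pi> i * mexp n (mscale q Q) i a * mexp n (mscale (r - q) Q) a b"
proof -
  define ts :: "nat \<Rightarrow> real" where "ts j = (if j = 0 then 0 else if j = 1 then q else r)" for j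
  define st :: "nat \<Rightarrow> nat" where "st j = (if j = 0 then i else if j = 1 then a else b)" for j
  have "measure M {\<omega>\<in>space M. \<forall>j\<le>2. \<phi> \<omega> (ts j) = st j} =
     \<pi> (st 0) * (\<Prod>j<2. mexp n (mscale (ts (Suc j) - ts j) Q) (st j) (st (Suc j)))"
    by (rule fdd) (auto simp: ts_def assms less_Suc_eq numeral_2_eq_2)
  moreover have "{\<omega>\<in>space M. \<forall>j\<le>2. \<phi> \<omega> (ts j) = st j} = {\<omega>\<in>space M. \<phi> \<omega> 0 = i \<and> \<phi> \<omega> q = a \<and> \<phi> \<omega> r = b}"
    unfolding all_le2 by (auto simp: ts_def st_def)
  ultimately show ?thesis by (simp add: ts_def st_def numeral_2_eq_2)
qed

lemma AE_pair:
  assumes "0 \<le> q" "q \<le> r"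
  shows "AE \<omega> in M. 2*p \<le> \<phi> \<omega> q \<longrightarrow> \<phi> \<omega> r = \<phi> \<omega> q"
proof -
  have null: "AE \<omega> in M. \<not> (\<phi> \<omega> 0 = i \<and> \<phi> \<omega> q = a \<and> \<phi> \<omega> r = b)" if "2*p \<le> a" "a \<noteq> b" for i a b
  proof (rule AE_I')
    let ?N = "{\<omega>\<in>space M. \<phi> \<omega> 0 = i \<and> \<phi> \<omega> q = a \<and> \<phi> \<omega> r = b}"
    have N: "?N \<in> sets M"
      by (intro sets.sets_Collect_conj sets_phi)
    have "mexp n (mscale (r - q) Q) a b = mid a b" by (rule mexp_absorb) (simp add: Z that)
    then have "measure M ?N = 0" using fdd2[OF assms] that by (simp add: mid_def)
    then show "?N \<in> null_sets M" using N by (simp add: emeasure_eq_measure null_sets_def)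
  qed auto
  have "AE \<omega> in M. \<forall>i\<in>{..<n}. \<forall>a\<in>{..<n}. \<forall>b\<in>{..<n}. 2*p \<le> a \<longrightarrow> a \<noteq> b \<longrightarrow> \<not> (\<phi> \<omega> 0 = i \<and> \<phi> \<omega> q = a \<and> \<phi> \<omega> r = b)"
    by (intro AE_finite_allI finite_lessThan AE_impI) (rule null)
  then show ?thesis
  proof (rule AE_mp[OF _ AE_I2], intro impI)
    fix \<omega> assume \<omega>: "\<omega> \<in> space M" and
      H: "\<forall>i\<in>{..<n}. \<forall>a\<in>{..<n}. \<forall>b\<in>{..<n}. 2*p \<le> a \<longrightarrow> a \<noteq> b \<longrightarrow> \<not> (\<phi> \<omega> 0 = i \<and> \<phi> \<omega> q = a \<and> \<phi> \<omega> r = b)"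
      and c: "2*p \<le> \<phi> \<omega> q"
    have lt: "\<phi> \<omega> 0 \<in> {..<n}" "\<phi> \<omega> q \<in> {..<n}" "\<phi> \<omega> r \<in> {..<n}"
      using rng[OF \<omega>, of 0] rng[OF \<omega>, of q] rng[OF \<omega>, of r] assms by auto
    show "\<phi> \<omega> r = \<phi> \<omega> q"
    proof (rule ccontr)
      assume "\<phi> \<omega> r \<noteq> \<phi> \<omega> q"
      then have "\<phi> \<omega> q \<noteq> \<phi> \<omega> r" by simp
      from H[rule_format, OF lt(1) lt(2) lt(3) c this] show False by simp
    qed
  qed
qed

lemma AE_good: "AE \<omega> in M. \<forall>q\<in>\<rat>. \<forall>r\<in>\<rat>. 0 \<le> q \<longrightarrow> q \<le> r \<longrightarrow> 2*p \<le> \<phi> \<omega> q \<longrightarrow> \<phi> \<omega> r = \<phi> \<omega> q"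
proof (intro AE_ball_countable' countable_rat)
  fix q r :: real
  show "AE \<omega> in M. 0 \<le> q \<longrightarrow> q \<le> r \<longrightarrow> 2*p \<le> \<phi> \<omega> q \<longrightarrow> \<phi> \<omega> r = \<phi> \<omega> q"
    by (intro AE_impI AE_pair)
qed

lemma prob_state:
  assumes "0 \<le> t"
  shows "measure M {\<omega>\<in>space M. \<phi> \<omega> t = k} = (\<Sum>i<n. \<pi> i * mexp n (mscale t Q) i k)"
proof -
  have "{\<omega>\<in>space M. \<phi> \<omega> t = k} = (\<Union>i\<in>{..<n}. {\<omega>\<in>space M. \<phi> \<omega> 0 = i \<and> \<phi> \<omega> t = k})"
    using rng by auto
  then have "measure M {\<omega>\<in>space M. \<phi> \<omega> t = k} = (\<Sum>i<n. measure M {\<omega>\<in>space M. \<phi> \<omega> 0 = i \<and> \<phi> \<omega> t = k})"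
    by (simp, intro finite_measure_finite_Union)
       (auto simp: disjoint_family_on_def intro!: sets.sets_Collect_conj sets_phi)
  then show ?thesis using fdd1[OF assms] by simp
qed

end

context mjp begin

lemma exits_eq: assumes "\<omega> \<in> space M" shows "exits p \<phi> \<omega> \<longleftrightarrow> (\<exists>q\<in>\<rat>. 0 \<le> q \<and> 2*p \<le> \<phi> \<omega> q)"
  unfolding exits_def by (rule exits_rat[OF rc[OF assms]])

lemma sets_exits: "{\<omega>\<in>space M. exits p \<phi> \<omega>} \<in> sets M"
proof -
  have "{\<omega>\<in>space M. exits p \<phi> \<omega>} = {\<omega>\<in>space M. \<exists>q\<in>\<rat>. 0 \<le> q \<and> 2*p \<le> \<phi> \<omega> q}"
    using exits_eq by blast
  also have "\<dots> \<in> sets M"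
  proof (rule sets.sets_Collect_countable_Ex'[OF _ countable_rat])
    fix q :: real
    show "{\<omega>\<in>space M. 0 \<le> q \<and> 2*p \<le> \<phi> \<omega> q} \<in> sets M"
      by (rule sets_phi[where P="\<lambda>v. 0 \<le> q \<and> 2*p \<le> v" and t=q])
  qed
  finally show ?thesis .
qed

lemma tau_att: "\<omega> \<in> space M \<Longrightarrow> exits p \<phi> \<omega> \<Longrightarrow> 0 \<le> tau p \<phi> \<omega> \<and> 2*p \<le> \<phi> \<omega> (tau p \<phi> \<omega>)"
  unfolding exits_def tau_def by (rule inf_attained[OF rc])

lemma tau_meas: "tau p \<phi> \<in> borel_measurable M"
proof (unfold borel_measurable_iff_less, intro allI)
  fix a :: real
  have eq: "{\<omega>\<in>space M. tau p \<phi> \<omega> < a} =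
    {\<omega>\<in>space M. (exits p \<phi> \<omega> \<and> (\<exists>q\<in>\<rat>. 0 \<le> q \<and> q < a \<and> 2*p \<le> \<phi> \<omega> q)) \<or>
                 (\<not> exits p \<phi> \<omega> \<and> Inf ({}::real set) < a)}"
  proof (intro Collect_cong conj_cong refl)
    fix \<omega> assume \<omega>: "\<omega> \<in> space M"
    show "tau p \<phi> \<omega> < a \<longleftrightarrow> (exits p \<phi> \<omega> \<and> (\<exists>q\<in>\<rat>. 0 \<le> q \<and> q < a \<and> 2*p \<le> \<phi> \<omega> q)) \<or>
                 (\<not> exits p \<phi> \<omega> \<and> Inf ({}::real set) < a)"
    proof (cases "exits p \<phi> \<omega>")
      case True
      then show ?thesis unfolding tau_def using tau_less_rat[OF rc[OF \<omega>], of "2*p" a] True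
        unfolding exits_def by simp
    next
      case False
      then have e: "{x. 0 \<le> x \<and> 2*p \<le> \<phi> \<omega> x} = {}" unfolding exits_def by auto
      show ?thesis using False unfolding tau_def e by simp
    qed
  qed
  have s1: "{\<omega>\<in>space M. \<exists>q\<in>\<rat>. 0 \<le> q \<and> q < a \<and> 2*p \<le> \<phi> \<omega> q} \<in> sets M"
  proof (rule sets.sets_Collect_countable_Ex'[OF _ countable_rat])
    fix q :: real
    show "{\<omega>\<in>space M. 0 \<le> q \<and> q < a \<and> 2*p \<le> \<phi> \<omega> q} \<in> sets M"
      by (rule sets_phi[where P="\<lambda>v. 0 \<le> q \<and> q < a \<and> 2*p \<le> v" and t=q])
  qed
  show "{\<omega>\<in>space M. tau p \<phi> \<omega> < a} \<in> sets M"
    unfolding eq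
    by (intro sets.sets_Collect_disj sets.sets_Collect_conj sets.sets_Collect_neg sets_exits s1
        sets.sets_Collect_const)
qed

lemma sets_A:
  assumes k: "2*p \<le> k"
  shows "{\<omega>\<in>space M. exits p \<phi> \<omega> \<and> \<phi> \<omega> (tau p \<phi> \<omega>) = k} \<in> sets M"
proof -
  have "{\<omega>\<in>space M. exits p \<phi> \<omega> \<and> \<phi> \<omega> (tau p \<phi> \<omega>) = k} =
     {\<omega>\<in>space M. exits p \<phi> \<omega> \<and> (\<exists>q\<in>\<rat>. 0 \<le> q \<and> \<phi> \<omega> q = k \<and>
         (\<forall>q'\<in>\<rat>. 0 \<le> q' \<longrightarrow> q' \<le> q \<longrightarrow> 2*p \<le> \<phi> \<omega> q' \<longrightarrow> \<phi> \<omega> q' = k))}"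
  proof (intro Collect_cong conj_cong refl)
    fix \<omega> assume \<omega>: "\<omega> \<in> space M" and ex: "exits p \<phi> \<omega>"
    show "\<phi> \<omega> (tau p \<phi> \<omega>) = k \<longleftrightarrow> (\<exists>q\<in>\<rat>. 0 \<le> q \<and> \<phi> \<omega> q = k \<and>
         (\<forall>q'\<in>\<rat>. 0 \<le> q' \<longrightarrow> q' \<le> q \<longrightarrow> 2*p \<le> \<phi> \<omega> q' \<longrightarrow> \<phi> \<omega> q' = k))"
    proof -
      have ex': "\<exists>x\<ge>0. 2*p \<le> \<phi> \<omega> x" using ex unfolding exits_def by simp
      show ?thesis unfolding tau_def by (rule tau_state_rat[OF rc[OF \<omega>] ex' k])
    qed
  qed
  also have "\<dots> = {\<omega>\<in>space M. exits p \<phi> \<omega>} \<inter> {\<omega>\<in>space M. \<exists>q\<in>\<rat>. 0 \<le> q \<and> \<phi> \<omega> q = k \<and>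
         (\<forall>q'\<in>\<rat>. 0 \<le> q' \<longrightarrow> q' \<le> q \<longrightarrow> 2*p \<le> \<phi> \<omega> q' \<longrightarrow> \<phi> \<omega> q' = k)}" by blast
  also have "\<dots> \<in> sets M"
  proof (rule sets.Int[OF sets_exits], rule sets.sets_Collect_countable_Ex'[OF _ countable_rat])
    fix q :: real
    have s2: "{\<omega>\<in>space M. \<forall>q'\<in>\<rat>. 0 \<le> q' \<longrightarrow> q' \<le> q \<longrightarrow> 2*p \<le> \<phi> \<omega> q' \<longrightarrow> \<phi> \<omega> q' = k} \<in> sets M"
    proof (rule sets.sets_Collect_countable_All'[OF _ countable_rat])
      fix q' :: real
      show "{\<omega>\<in>space M. 0 \<le> q' \<longrightarrow> q' \<le> q \<longrightarrow> 2*p \<le> \<phi> \<omega> q' \<longrightarrow> \<phi> \<omega> q' = k} \<in> sets M"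
        by (rule sets_phi[where P="\<lambda>v. 0 \<le> q' \<longrightarrow> q' \<le> q \<longrightarrow> 2*p \<le> v \<longrightarrow> v = k" and t=q'])
    qed
    have s1: "{\<omega>\<in>space M. 0 \<le> q \<and> \<phi> \<omega> q = k} \<in> sets M"
      by (rule sets_phi[where P="\<lambda>v. 0 \<le> q \<and> v = k" and t=q])
    have eq: "{\<omega>\<in>space M. 0 \<le> q \<and> \<phi> \<omega> q = k \<and>
         (\<forall>q'\<in>\<rat>. 0 \<le> q' \<longrightarrow> q' \<le> q \<longrightarrow> 2*p \<le> \<phi> \<omega> q' \<longrightarrow> \<phi> \<omega> q' = k)}
       = {\<omega>\<in>space M. 0 \<le> q \<and> \<phi> \<omega> q = k} \<inter> {\<omega>\<in>space M. \<forall>q'\<in>\<rat>. 0 \<le> q' \<longrightarrow> q' \<le> q \<longrightarrow> 2*p \<le> \<phi> \<omega> q' \<longrightarrow> \<phi> \<omega> q' = k}"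
      by blast
    show "{\<omega>\<in>space M. 0 \<le> q \<and> \<phi> \<omega> q = k \<and>
         (\<forall>q'\<in>\<rat>. 0 \<le> q' \<longrightarrow> q' \<le> q \<longrightarrow> 2*p \<le> \<phi> \<omega> q' \<longrightarrow> \<phi> \<omega> q' = k)} \<in> sets M"
      unfolding eq by (rule sets.Int[OF s1 s2])
  qed
  finally show ?thesis .
qed

definition Aset :: "nat \<Rightarrow> real set \<Rightarrow> 'w set" where
  "Aset k B = {\<omega>\<in>space M. exits p \<phi> \<omega> \<and> \<phi> \<omega> (tau p \<phi> \<omega>) = k \<and> tau p \<phi> \<omega> \<in> B}"

lemma Aset_eq: "Aset k B = {\<omega>\<in>space M. exits p \<phi> \<omega> \<and> \<phi> \<omega> (tau p \<phi> \<omega>) = k} \<inter> (tau p \<phi> -` B \<inter> space M)"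
  unfolding Aset_def by blast

lemma sets_Aset: "2*p \<le> k \<Longrightarrow> B \<in> sets borel \<Longrightarrow> Aset k B \<in> sets M"
  unfolding Aset_eq by (intro sets.Int sets_A measurable_sets[OF tau_meas])

lemma Aset_neg: "t < 0 \<Longrightarrow> Aset k {..t} = {}"
  unfolding Aset_def using tau_att by fastforce

lemma Aset_prob:
  assumes k: "2*p \<le> k" and t: "0 \<le> t"
  shows "measure M (Aset k {..t}) = measure M {\<omega>\<in>space M. \<phi> \<omega> t = k}"
proof (rule measure_eq_AE)
  show "Aset k {..t} \<in> sets M" using sets_Aset[OF k] by simp
  show "{\<omega>\<in>space M. \<phi> \<omega> t = k} \<in> sets M" by (rule sets_phi)
  show "AE \<omega> in M. (\<omega> \<in> Aset k {..t}) = (\<omega> \<in> {\<omega>\<in>space M. \<phi> \<omega> t = k})"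
    using AE_good
  proof (rule AE_mp[OF _ AE_I2], intro impI)
    fix \<omega> assume \<omega>: "\<omega> \<in> space M"
      and G: "\<forall>q\<in>\<rat>. \<forall>r\<in>\<rat>. 0 \<le> q \<longrightarrow> q \<le> r \<longrightarrow> 2*p \<le> \<phi> \<omega> q \<longrightarrow> \<phi> \<omega> r = \<phi> \<omega> q"
    have "((\<exists>x\<ge>0. 2*p \<le> \<phi> \<omega> x) \<and> Inf {x. 0\<le>x \<and> 2*p \<le> \<phi> \<omega> x} \<le> t \<and>
          \<phi> \<omega> (Inf {x. 0\<le>x \<and> 2*p \<le> \<phi> \<omega> x}) = k) \<longleftrightarrow> \<phi> \<omega> t = k"
      by (rule good_equiv[OF rc[OF \<omega>] G t k])
    then show "(\<omega> \<in> Aset k {..t}) = (\<omega> \<in> {\<omega>\<in>space M. \<phi> \<omega> t = k})"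
      using \<omega> unfolding Aset_def exits_def tau_def by auto
  qed
qed

end

context mjp begin

definition Fm :: "nat \<Rightarrow> real \<Rightarrow> real" where
  "Fm k = (\<lambda>t. \<Sum>i<n. \<pi> i * mexp n (mscale t Q) i k)"

definition gk :: "nat \<Rightarrow> real \<Rightarrow> real" where
  "gk k = (\<lambda>t. \<Sum>i<n. \<pi> i * (\<Sum>j<n. mexp n (mscale t Q) i j * Q j k))"

lemma Fm_deriv: "k < n \<Longrightarrow> DERIV (Fm k) t :> gk k t"
  unfolding Fm_def gk_def by (intro DERIV_sum DERIV_cmult mexp_deriv)

lemma mexp_cont: "j < n \<Longrightarrow> continuous_on UNIV (\<lambda>t. mexp n (mscale t Q) i j)"
  by (rule DERIV_continuous_on, rule has_field_derivative_at_within, rule mexp_deriv)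

lemma gk_cont: "k < n \<Longrightarrow> continuous_on UNIV (gk k)"
  unfolding gk_def by (intro continuous_on_sum continuous_on_mult continuous_on_const mexp_cont) auto

lemma gk_meas: "k < n \<Longrightarrow> gk k \<in> borel_measurable borel"
  by (rule borel_measurable_continuous_onI[OF gk_cont])

lemma Fm0: "k < n \<Longrightarrow> Fm k 0 = \<pi> k"
proof -
  assume k: "k < n"
  have "Fm k 0 = (\<Sum>i<n. if i = k then \<pi> i else 0)"
    unfolding Fm_def mexp_zero by (intro sum.cong refl) (simp add: mid_def)
  also have "\<dots> = \<pi> k" using k by simp
  finally show ?thesis .
qed

lemma Fm_prob: "0 \<le> t \<Longrightarrow> measure M {\<omega>\<in>space M. \<phi> \<omega> t = k} = Fm k t"
  unfolding Fm_def by (rule prob_state)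

lemma Fm_mono:
  assumes k: "2*p \<le> k" and s: "0 \<le> s" "s \<le> t"
  shows "Fm k s \<le> Fm k t"
proof -
  have t: "0 \<le> t" using s by linarith
  have "measure M {\<omega>\<in>space M. \<phi> \<omega> s = k} \<le> measure M {\<omega>\<in>space M. \<phi> \<omega> t = k}"
  proof (rule finite_measure_mono_AE[OF _ sets_phi])
    show "AE \<omega> in M. \<omega> \<in> {\<omega>\<in>space M. \<phi> \<omega> s = k} \<longrightarrow> \<omega> \<in> {\<omega>\<in>space M. \<phi> \<omega> t = k}"
      using AE_good
    proof (rule AE_mp[OF _ AE_I2], intro impI)
      fix \<omega> assume \<omega>: "\<omega> \<in> space M"
        and G: "\<forall>q\<in>\<rat>. \<forall>r\<in>\<rat>. 0 \<le> q \<longrightarrow> q \<le> r \<longrightarrow> 2*p \<le> \<phi> \<omega> q \<longrightarrow> \<phi> \<omega> r = \<phi> \<omega> q"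
        and a: "\<omega> \<in> {\<omega>\<in>space M. \<phi> \<omega> s = k}"
      have fs: "\<phi> \<omega> s = k" using a by simp
      then have "2*p \<le> \<phi> \<omega> s" using k by simp
      then have "\<phi> \<omega> t = \<phi> \<omega> s" by (rule good_const[OF rc[OF \<omega>] G s(1) _ s(2)])
      then show "\<omega> \<in> {\<omega>\<in>space M. \<phi> \<omega> t = k}" using \<omega> fs by simp
    qed
  qed
  then show ?thesis using Fm_prob[OF s(1)] Fm_prob[OF t] by simp
qed

lemma gk_nonneg:
  assumes k: "2*p \<le> k" "k < n" and x: "0 \<le> x"
  shows "0 \<le> gk k x"
proof (rule ccontr)
  assume "\<not> 0 \<le> gk k x"
  then have "gk k x < 0" by simp
  from DERIV_neg_dec_right[OF Fm_deriv[OF k(2)] this]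
  obtain d where d: "d > 0" "\<And>h. h > 0 \<Longrightarrow> h < d \<Longrightarrow> Fm k x > Fm k (x + h)" by blast
  have "Fm k x > Fm k (x + d/2)" using d by simp
  moreover have "Fm k x \<le> Fm k (x + d/2)" using d x by (intro Fm_mono k(1)) auto
  ultimately show False by simp
qed

lemma gk_int:
  assumes k: "k < n" and t: "0 \<le> t"
  shows "(gk k has_integral (Fm k t - Fm k 0)) {0..t}"
proof (rule fundamental_theorem_of_calculus[OF t])
  fix x :: real assume "x \<in> {0..t}"
  show "(Fm k has_vector_derivative gk k x) (at x within {0..t})"
    using Fm_deriv[OF k, of x] unfolding has_real_derivative_iff_has_vector_derivative
    by (rule has_vector_derivative_at_within)
qed

definition Ak :: "nat \<Rightarrow> 'w set" where
  "Ak k = {\<omega>\<in>space M. exits p \<phi> \<omega> \<and> \<phi> \<omega> (tau p \<phi> \<omega>) = k}"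

definition N1 :: "nat \<Rightarrow> real measure" where
  "N1 k = distr (density M (indicator (Ak k))) borel (tau p \<phi>)"

definition N2 :: "nat \<Rightarrow> real measure" where
  "N2 k = density lborel (\<lambda>x. ennreal (indicator {0..} x * gk k x))"

lemma N1_emeasure:
  assumes k: "2*p \<le> k" and B: "B \<in> sets borel"
  shows "emeasure (N1 k) B = emeasure M (Aset k B)"
proof -
  have Ak: "Ak k \<in> sets M" unfolding Ak_def by (rule sets_A[OF k])
  have T: "tau p \<phi> -` B \<inter> space M \<in> sets M" by (rule measurable_sets[OF tau_meas B])
  have "emeasure (N1 k) B = emeasure (density M (indicator (Ak k))) (tau p \<phi> -` B \<inter> space M)"
    unfolding N1_def by (subst emeasure_distr) (simp_all add: tau_meas B)
  also have "\<dots> = (\<integral>\<^sup>+ x. indicator (Ak k) x * indicator (tau p \<phi> -` B \<inter> space M) x \<partial>M)"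
    by (rule emeasure_density[OF borel_measurable_indicator[OF Ak] T])
  also have "\<dots> = (\<integral>\<^sup>+ x. indicator (Ak k \<inter> (tau p \<phi> -` B \<inter> space M)) x \<partial>M)"
    by (simp add: indicator_inter_arith)
  also have "\<dots> = emeasure M (Ak k \<inter> (tau p \<phi> -` B \<inter> space M))"
    by (rule nn_integral_indicator) (rule sets.Int[OF Ak T])
  also have "Ak k \<inter> (tau p \<phi> -` B \<inter> space M) = Aset k B"
    unfolding Ak_def Aset_eq ..
  finally show ?thesis .
qed

lemma N2_emeasure:
  assumes k: "k < n" and B: "B \<in> sets borel"
  shows "emeasure (N2 k) B = (\<integral>\<^sup>+ x. ennreal (indicator {0..} x * gk k x) * indicator B x \<partial>lborel)"
  unfolding N2_def
proof (rule emeasure_density)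
  show "(\<lambda>x. ennreal (indicator {0..} x * gk k x)) \<in> borel_measurable lborel"
    using gk_meas[OF k] by measurable
  show "B \<in> sets lborel" using B by simp
qed

lemma N1_atMost:
  assumes k: "2*p \<le> k"
  shows "emeasure (N1 k) {..t} = (if t < 0 then 0 else ennreal (Fm k t))"
proof (cases "t < 0")
  case True then show ?thesis using N1_emeasure[OF k, of "{..t}"] Aset_neg by simp
next
  case False
  then have t: "0 \<le> t" by simp
  have "emeasure (N1 k) {..t} = emeasure M (Aset k {..t})" using N1_emeasure[OF k] by simp
  also have "\<dots> = ennreal (measure M (Aset k {..t}))" by (rule emeasure_eq_measure)
  also have "\<dots> = ennreal (Fm k t)" using Aset_prob[OF k t] Fm_prob[OF t] by simp
  finally show ?thesis using False by simp
qed

lemma N2_atMost: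
  assumes k: "2*p \<le> k" "k < n" and pk: "\<pi> k = 0"
  shows "emeasure (N2 k) {..t} = (if t < 0 then 0 else ennreal (Fm k t))"
proof (cases "t < 0")
  case True
  have "(\<lambda>x. ennreal (indicator {0..} x * gk k x) * indicator {..t} x) = (\<lambda>x. 0)"
    by (rule ext) (use True in \<open>auto split: split_indicator\<close>)
  then show ?thesis using True N2_emeasure[OF k(2) atMost_borel, of t] by simp
next
  case False
  then have t: "0 \<le> t" by simp
  have "(\<lambda>x. ennreal (indicator {0..} x * gk k x) * indicator {..t} x) = (\<lambda>x. ennreal (indicator {0..t} x * gk k x))"
    by (rule ext) (auto split: split_indicator)
  then have "emeasure (N2 k) {..t} = (\<integral>\<^sup>+ x. ennreal (indicator {0..t} x * gk k x) \<partial>lborel)"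
    using N2_emeasure[OF k(2) atMost_borel, of t] by simp
  also have "\<dots> = ennreal (Fm k t - Fm k 0)"
    by (rule nn_integral_has_integral_lebesgue[OF _ gk_int[OF k(2) t]]) (auto intro: gk_nonneg[OF k])
  also have "Fm k 0 = 0" using Fm0[OF k(2)] pk by simp
  finally show ?thesis using False by simp
qed

end

lemma sets_borel_atMost: "sets (borel :: real measure) = sigma_sets UNIV (range (\<lambda>a::real. {..a}))"
  by (subst borel_eq_atMost) (simp add: sets_measure_of)

context mjp begin

lemma N12:
  assumes k: "2*p \<le> k" "k < n" and pk: "\<pi> k = 0"
  shows "N1 k = N2 k"
proof (rule measure_eqI_generator_eq[where E="range (\<lambda>a::real. {..a})" and \<Omega>=UNIV and A="\<lambda>i. {..real i}"])
  show "Int_stable (range (\<lambda>a::real. {..a}))"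
  proof (rule Int_stableI)
    fix X Y assume "X \<in> range (\<lambda>a::real. {..a})" "Y \<in> range (\<lambda>a::real. {..a})"
    then obtain a b where "X = {..a}" "Y = {..b}" by blast
    then have "X \<inter> Y = {..min a b}" by auto
    then show "X \<inter> Y \<in> range (\<lambda>a::real. {..a})" by blast
  qed
  show "range (\<lambda>a::real. {..a}) \<subseteq> Pow UNIV" by simp
  show "emeasure (N1 k) X = emeasure (N2 k) X" if "X \<in> range (\<lambda>a::real. {..a})" for X
    using that N1_atMost[OF k(1)] N2_atMost[OF k pk] by auto
  show "sets (N1 k) = sigma_sets UNIV (range (\<lambda>a::real. {..a}))"
    unfolding N1_def sets_borel_atMost[symmetric] by simp
  show "sets (N2 k) = sigma_sets UNIV (range (\<lambda>a::real. {..a}))"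
    unfolding N2_def sets_borel_atMost[symmetric] by simp
  show "range (\<lambda>i::nat. {..real i}) \<subseteq> range (\<lambda>a::real. {..a})" by auto
  show "(\<Union>i::nat. {..real i}) = UNIV"
    by (auto simp: real_arch_simple)
  show "emeasure (N1 k) {..real i} \<noteq> \<infinity>" for i
    using N1_atMost[OF k(1), of "real i"] by simp
qed

lemma result_k:
  assumes k: "2*p \<le> k" "k < n" and pk: "\<pi> k = 0" and B: "B \<in> sets borel" "B \<subseteq> {0..}"
  shows "set_integrable lborel B (gk k) \<and> (LINT x:B|lborel. gk k x) = measure M (Aset k B)"
proof -
  have e: "emeasure (N2 k) B = emeasure M (Aset k B)"
    using N1_emeasure[OF k(1) B(1)] N12[OF k pk] by simp
  have pw: "(\<lambda>x. ennreal (indicator {0..} x * gk k x) * indicator B x) = (\<lambda>x. ennreal (indicator B x * gk k x))"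
    using B(2) by (intro ext) (auto split: split_indicator)
  have nn: "(\<integral>\<^sup>+ x. ennreal (indicator B x * gk k x) \<partial>lborel) = emeasure M (Aset k B)"
    using e N2_emeasure[OF k(2) B(1)] pw by simp
  have gm: "gk k \<in> borel_measurable lborel" using gk_meas[OF k(2)] by simp
  have hm: "(\<lambda>x. indicator B x * gk k x) \<in> borel_measurable lborel"
    using gm B(1) by measurable
  have h0: "0 \<le> indicator B x * gk k x" for x
    using B(2) gk_nonneg[OF k, of x] by (auto split: split_indicator)
  have fin: "(\<integral>\<^sup>+ x. ennreal (indicator B x * gk k x) \<partial>lborel) < \<infinity>"
    unfolding nn by (simp add: emeasure_eq_measure)
  have int: "integrable lborel (\<lambda>x. indicator B x * gk k x)"
    by (rule integrableI_nonneg[OF hm]) (use h0 fin in auto)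
  have "(\<integral>x. indicator B x * gk k x \<partial>lborel) = enn2real (\<integral>\<^sup>+ x. ennreal (indicator B x * gk k x) \<partial>lborel)"
    by (rule integral_eq_nn_integral[OF hm]) (use h0 in auto)
  also have "\<dots> = measure M (Aset k B)" unfolding nn by (simp add: measure_def)
  finally show ?thesis using int unfolding set_integrable_def set_lebesgue_integral_def by simp
qed

end

context mjp begin

lemma tau_measure_eq:
  assumes B: "B \<in> sets borel"
  shows "tau_measure M p \<phi> B = measure M (Aset (2*p) B) - measure M (Aset (2*p+1) B)"
proof -
  have S1: "Aset (2*p) B \<in> sets M" by (rule sets_Aset[OF _ B]) simp
  have S2: "Aset (2*p+1) B \<in> sets M" by (rule sets_Aset[OF _ B]) simp
  have "tau_measure M p \<phi> B = (\<integral>\<omega>. indicator (Aset (2*p) B) \<omega> - indicator (Aset (2*p+1) B) \<omega> \<partial>M)"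
    unfolding tau_measure_def
  proof (rule Bochner_Integration.integral_cong[OF refl])
    fix \<omega> assume "\<omega> \<in> space M"
    then show "(if exits p \<phi> \<omega> \<and> tau p \<phi> \<omega> \<in> B then beta p (\<phi> \<omega> (tau p \<phi> \<omega>)) else 0)
        = indicator (Aset (2*p) B) \<omega> - indicator (Aset (2*p+1) B) \<omega>"
      by (auto simp: Aset_def beta_def split: split_indicator)
  qed
  also have "\<dots> = measure M (Aset (2*p) B) - measure M (Aset (2*p+1) B)"
    using S1 S2 sets.sets_into_space[OF S1] sets.sets_into_space[OF S2]
    by (subst Bochner_Integration.integral_diff) (auto simp: emeasure_eq_measure Int_absorb2)
  finally show ?thesis .
qed

end

lemma gk_block:
  assumes k: "k = 2*p \<or> k = 2*p+1"
  shows "(\<Sum>i<2*p+3. init_dist p \<alpha> i * (\<Sum>j<2*p+3. mexp (2*p+3) (mscale x (genQ p T s lam)) i j * genQ p T s lam j k))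
       = (\<Sum>i<2*p. init_dist p \<alpha> i * (\<Sum>j<2*p. mexp (2*p) (mscale x (blockG p T s lam)) i j * subG p T s lam j k))"
proof (rule sum.mono_neutral_cong_right)
  show "finite {..<2*p+3}" by simp
  show "{..<2*p} \<subseteq> {..<2*p+3}" by auto
  show "\<forall>i\<in>{..<2*p+3} - {..<2*p}. init_dist p \<alpha> i * (\<Sum>j<2*p+3. mexp (2*p+3) (mscale x (genQ p T s lam)) i j * genQ p T s lam j k) = 0"
    by (auto simp: init_dist_def)
  fix i assume i: "i \<in> {..<2*p}"
  have "(\<Sum>j<2*p+3. mexp (2*p+3) (mscale x (genQ p T s lam)) i j * genQ p T s lam j k)
      = (\<Sum>j<2*p. mexp (2*p) (mscale x (blockG p T s lam)) i j * subG p T s lam j k)"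
  proof (rule sum.mono_neutral_cong_right)
    show "finite {..<2*p+3}" by simp
    show "{..<2*p} \<subseteq> {..<2*p+3}" by auto
    show "\<forall>j\<in>{..<2*p+3} - {..<2*p}. mexp (2*p+3) (mscale x (genQ p T s lam)) i j * genQ p T s lam j k = 0"
      by (auto simp: genQ_def)
    fix j assume j: "j \<in> {..<2*p}"
    have "mexp (2*p+3) (mscale x (genQ p T s lam)) i j = mexp (2*p) (mscale x (blockG p T s lam)) i j"
      by (rule mexp_block) (use i j in \<open>auto simp: genQ_def blockG_def\<close>)
    moreover have "genQ p T s lam j k = subG p T s lam j k" using j k by (auto simp: genQ_def)
    ultimately show "mexp (2*p+3) (mscale x (genQ p T s lam)) i j * genQ p T s lam j k
        = mexp (2*p) (mscale x (blockG p T s lam)) i j * subG p T s lam j k" by simp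
  qed
  then show "init_dist p \<alpha> i * (\<Sum>j<2*p+3. mexp (2*p+3) (mscale x (genQ p T s lam)) i j * genQ p T s lam j k)
      = init_dist p \<alpha> i * (\<Sum>j<2*p. mexp (2*p) (mscale x (blockG p T s lam)) i j * subG p T s lam j k)" by simp
qed

lemma s_pm_subG: "j < 2*p \<Longrightarrow> s_pm p s j = subG p T s lam j (2*p) - subG p T s lam j (2*p+1)"
  by (auto simp: s_pm_def subG_def splus_def sminus_def)

lemma g_decomp:
  "bilin (2*p) a (mexp (2*p) (mscale x (blockG p T s lam))) (s_pm p s)
   = (\<Sum>i<2*p. a i * (\<Sum>j<2*p. mexp (2*p) (mscale x (blockG p T s lam)) i j * subG p T s lam j (2*p)))
   - (\<Sum>i<2*p. a i * (\<Sum>j<2*p. mexp (2*p) (mscale x (blockG p T s lam)) i j * subG p T s lam j (2*p+1)))"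
  unfolding bilin_def sum_subtractf[symmetric]
proof (rule sum.cong[OF refl])
  fix i assume "i \<in> {..<2*p}"
  have "(\<Sum>j<2*p. a i * mexp (2*p) (mscale x (blockG p T s lam)) i j * s_pm p s j)
     = (\<Sum>j<2*p. a i * (mexp (2*p) (mscale x (blockG p T s lam)) i j * subG p T s lam j (2*p))
        - a i * (mexp (2*p) (mscale x (blockG p T s lam)) i j * subG p T s lam j (2*p+1)))"
  proof (rule sum.cong[OF refl])
    fix j assume "j \<in> {..<2*p}"
    then have SP: "s_pm p s j = subG p T s lam j (2*p) - subG p T s lam j (2*p+1)"
      by (intro s_pm_subG) simp
    show "a i * mexp (2*p) (mscale x (blockG p T s lam)) i j * s_pm p s j
      = a i * (mexp (2*p) (mscale x (blockG p T s lam)) i j * subG p T s lam j (2*p))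
        - a i * (mexp (2*p) (mscale x (blockG p T s lam)) i j * subG p T s lam j (2*p+1))"
      unfolding SP by (simp add: algebra_simps)
  qed
  then show "(\<Sum>j<2*p. a i * mexp (2*p) (mscale x (blockG p T s lam)) i j * s_pm p s j)
     = a i * (\<Sum>j<2*p. mexp (2*p) (mscale x (blockG p T s lam)) i j * subG p T s lam j (2*p))
       - a i * (\<Sum>j<2*p. mexp (2*p) (mscale x (blockG p T s lam)) i j * subG p T s lam j (2*p+1))"
    by (simp add: sum_subtractf sum_distrib_left)
qed

theorem theorem3p2:
  fixes p :: nat and \<alpha> :: "nat \<Rightarrow> real" and T :: rmat and s :: "nat \<Rightarrow> real"
    and lam :: real and M :: "'w measure" and \<phi> :: "'w \<Rightarrow> real \<Rightarrow> nat"
  assumes p: "p \<ge> 1"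
    and dens_nonneg: "\<forall>x>0. ME_density p \<alpha> T s x \<ge> 0"
    and dens_int: "(ME_density p \<alpha> T s has_integral 1) {0<..}"
    and dom_eig: "\<exists>\<eta>::real. \<eta> < 0 \<and> is_eigenvalue p T (complex_of_real \<eta>) \<and>
                    (\<forall>z. is_eigenvalue p T z \<longrightarrow> Re z \<le> \<eta>)"
    and lam: "lam \<ge> lambda0 p T s"
    and transient: "\<forall>i<2*p. transient_state (2*p+3) (genQ p T s lam) i"
    and M: "prob_space M"
    and mjp: "is_MJP M (2*p+3) (genQ p T s lam) (init_dist p \<alpha>) \<phi>"
  shows "let c = bilin p \<alpha> (minv p (\<lambda>i j. (if i = j then lam else 0) - T i j)) s;
             w = wplus p \<alpha> + wminus p \<alpha>;
             flam = (\<lambda>x. (1 / c) * bilin p \<alpha> (mexp p (mscale x (\<lambda>i j. T i j - (if i = j then lam else 0)))) s)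
         in \<exists>g :: real \<Rightarrow> real.
              (\<forall>B\<in>sets borel. B \<subseteq> {0..} \<longrightarrow>
                 set_integrable lborel B g \<and> tau_measure M p \<phi> B = (LINT x:B|lborel. g x)) \<and>
              (\<forall>x\<ge>0. flam x = w / c * g x) \<and>
              (\<forall>x\<ge>0. flam x = w / c *
                 bilin (2*p) (init_dist p \<alpha>) (mexp (2*p) (mscale x (blockG p T s lam))) (s_pm p s))"
proof -
  interpret mjp M "2*p+3" "genQ p T s lam" "init_dist p \<alpha>" \<phi> p
    by (rule mjp.intro[OF M mjp]) (simp add: genQ_def)
  define c where "c = bilin p \<alpha> (minv p (\<lambda>i j. (if i = j then lam else 0) - T i j)) s"
  define w where "w = wplus p \<alpha> + wminus p \<alpha>"
  define g where "g x = bilin (2*p) (init_dist p \<alpha>) (mexp (2*p) (mscale x (blockG p T s lam))) (s_pm p s)" for x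
  have gk_eq: "g = (\<lambda>x. gk (2*p) x - gk (2*p+1) x)"
  proof (rule ext)
    fix x
    show "g x = gk (2*p) x - gk (2*p+1) x"
      unfolding g_def gk_def g_decomp
      using gk_block[where k="2*p" and p=p and \<alpha>=\<alpha> and x=x and T=T and s=s and lam=lam]
        gk_block[where k="2*p+1" and p=p and \<alpha>=\<alpha> and x=x and T=T and s=s and lam=lam]
      by simp
  qed
  have pk: "init_dist p \<alpha> k = 0" if "2*p \<le> k" for k using that by (simp add: init_dist_def)
  have part1: "set_integrable lborel B g \<and> tau_measure M p \<phi> B = (LINT x:B|lborel. g x)"
    if B: "B \<in> sets borel" "B \<subseteq> {0..}" for B
  proof -
    have r1: "set_integrable lborel B (gk (2*p)) \<and> (LINT x:B|lborel. gk (2*p) x) = measure M (Aset (2*p) B)"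
      by (rule result_k[OF _ _ pk B]) auto
    have r2: "set_integrable lborel B (gk (2*p+1)) \<and> (LINT x:B|lborel. gk (2*p+1) x) = measure M (Aset (2*p+1) B)"
      by (rule result_k[OF _ _ pk B]) auto
    show ?thesis unfolding gk_eq tau_measure_eq[OF B(1)]
      using set_integral_diff[of lborel B "gk (2*p)" "gk (2*p+1)"] r1 r2 by simp
  qed
  have TLe: "(\<lambda>i j. T i j - (if i = j then lam else 0)) = TL lam T" by (simp add: TL_def fun_eq_iff)
  have part2: "(1 / c) * bilin p \<alpha> (mexp p (mscale x (\<lambda>i j. T i j - (if i = j then lam else 0)))) s = w / c * g x" for x
    unfolding TLe g_def bilin_spm[symmetric] w_def by simp
  show ?thesis
    unfolding Let_def c_def[symmetric] w_def[symmetric]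
  proof (rule exI[of _ g], intro conjI)
    show "\<forall>B\<in>sets borel. B \<subseteq> {0..} \<longrightarrow> set_integrable lborel B g \<and> tau_measure M p \<phi> B = (LINT x:B|lborel. g x)"
      using part1 by blast
    show "\<forall>x\<ge>0. 1 / c * bilin p \<alpha> (mexp p (mscale x (\<lambda>i j. T i j - (if i = j then lam else 0)))) s = w / c * g x"
      using part2 by blast
    show "\<forall>x\<ge>0. 1 / c * bilin p \<alpha> (mexp p (mscale x (\<lambda>i j. T i j - (if i = j then lam else 0)))) s =
       w / c * bilin (2*p) (init_dist p \<alpha>) (mexp (2*p) (mscale x (blockG p T s lam))) (s_pm p s)"
      using part2 unfolding g_def by blast
  qed
qed


end
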